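(* Assume (A1)–(A3). Consider AdaFom: $m_0=0$, $\hat v_0=0$, and for $t\ge1$: $m_t=\beta_{1,t}m_{t-1}+(1-\beta_{1,t})g_t$, $\hat v_t=(1-1/t)\hat v_{t-1}+(1/t)g_t^2$ (so $\hat v_t=\frac1t\sum_{i=1}^tg_i^2$), $x_{t+1}=x_t-\alpha_tm_t/\sqrt{\hat v_t}$, with $\alpha_t=1/\sqrt t$ and $\beta_{1,t}\le\beta_1\in[0,1)$, $(\beta_{1,t})$ non-increasing. Suppose there exists $c>0$ with $|(g_1)_i|\ge c$ for all $i\in[d]$ almost surely. Then there exist constants $Q_1',Q_2'$ independent of $T$ such that for every $T\ge1$, $$\min_{t\in[T]}\mathbb{E}\big[\|\nabla f(x_t)\|^2\big]\le\frac{1}{\sqrt T}\big(Q_1'+Q_2'\log T\big).$$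
   Context: Problem: minimize $f(x)=\mathbb{E}_\xi[f(x;\xi)]$ over $x\in\mathbb{R}^d$; $g_t$ is a stochastic gradient evaluated at $x_t$. All vector operations (division, square root, squaring) are coordinatewise; $\|\cdot\|$ is the Euclidean norm; $[T]=\{1,\dots,T\}$. Assumptions: (A1) $f$ is differentiable, $\|\nabla f(x)-\nabla f(y)\|\le L\|x-y\|$ for all $x,y$, and $f$ attains its minimum at some $x^*$ with $f(x^* )>-\infty$. (A2) $\|\nabla f(x)\|\le H$ for all $x$ and $\|g_t\|\le H$ for all $t$ almost surely. (A3) $g_t=\nabla f(x_t)+\zeta_t$ where the noise $\zeta_t$ has zero mean conditionally on $g_1,\dots,g_{t-1}$. Expectations are over all randomness in $\{g_t\}$. *)

theory Defs
  imports "HOL-Probability.Probability"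
begin

text \<open>State of AdaFom after n steps: (x_{n+1}, m_n, hat v_n), driven by the
  gradient sequence gs (gs t = g_t for t >= 1). All operations coordinatewise.\<close>
primrec adafom_state ::
  "(nat \<Rightarrow> real) \<Rightarrow> real^'d \<Rightarrow> (nat \<Rightarrow> real^'d) \<Rightarrow> nat \<Rightarrow> ((real^'d) \<times> (real^'d) \<times> (real^'d))"
where
  "adafom_state beta x1 gs 0 = (x1, 0, 0)"
| "adafom_state beta x1 gs (Suc n) =
     (let (x, m, v) = adafom_state beta x1 gs n;
          t = Suc n;
          m' = beta t *\<^sub>R m + (1 - beta t) *\<^sub>R gs t;
          v' = (1 - 1 / real t) *\<^sub>R v + (1 / real t) *\<^sub>R (\<chi> i. (gs t $ i)\<^sup>2);
          x' = x - (1 / sqrt (real t)) *\<^sub>R (\<chi> i. m' $ i / sqrt (v' $ i))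
      in (x', m', v'))"

definition adafom_x ::
  "(nat \<Rightarrow> real) \<Rightarrow> real^'d \<Rightarrow> (nat \<Rightarrow> real^'d) \<Rightarrow> nat \<Rightarrow> real^'d" where
  "adafom_x beta x1 gs t = fst (adafom_state beta x1 gs (t - 1))"

definition hist :: "'a measure \<Rightarrow> (nat \<Rightarrow> 'a \<Rightarrow> 'b::topological_space) \<Rightarrow> nat \<Rightarrow> 'a measure" where
  "hist M g t = sigma (space M) (\<Union>i\<in>{1..<t}. {g i -` A \<inter> space M | A. A \<in> sets borel})"

end

theory Submission imports Defs begin

lemma vec_nth_meas[measurable]: fixes h :: "'a \<Rightarrow> real^'n"
  assumes "h \<in> borel_measurable N" shows "(\<lambda>w. h w $ i) \<in> borel_measurable N"
proof -
  have "(\<lambda>w. h w $ i) = (\<lambda>w. h w \<bullet> axis i 1)" by (simp add: inner_axis)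
  then show ?thesis using assms by simp
qed

lemma vec_meas: fixes F :: "'i::finite \<Rightarrow> 'a \<Rightarrow> real"
  assumes "\<And>i. F i \<in> borel_measurable N"
  shows "(\<lambda>w. \<chi> i. F i w) \<in> borel_measurable N"
proof -
  have "\<And>w. (\<chi> i. F i w) = (\<Sum>i\<in>UNIV. (\<chi> i. F i w) $ i *s axis i 1)" by (rule basis_expansion[symmetric])
  then have "(\<lambda>w. \<chi> i. F i w) = (\<lambda>w. \<Sum>i\<in>UNIV. F i w *\<^sub>R axis i 1)"
    by (simp add: scalar_mult_eq_scaleR)
  then show ?thesis using assms by simp
qed

lemma sqrt_meas[measurable]: "f \<in> borel_measurable N \<Longrightarrow> (\<lambda>x. sqrt (f x :: real)) \<in> borel_measurable N"
  using measurable_compose[OF _ borel_measurable_sqrt] by blast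

lemma norm2_vec: "(norm (v::real^'n))\<^sup>2 = (\<Sum>i\<in>UNIV. (v$i)\<^sup>2)"
  unfolding power2_norm_eq_inner inner_vec_def by (simp add: power2_eq_square)

lemma rec_sum:
  fixes u r :: "nat \<Rightarrow> real"
  assumes "u 0 = 0" "\<And>t. u t \<ge> 0" "\<And>t. t \<ge> 1 \<Longrightarrow> u t \<le> b * u (t - 1) + r t" "0 \<le> b" "b < 1"
  shows "(\<Sum>t\<in>{1..T}. u t) \<le> (\<Sum>t\<in>{1..T}. r t) / (1 - b)"
proof -
  have "(1 - b) * (\<Sum>t\<in>{1..T}. u t) + b * u T \<le> (\<Sum>t\<in>{1..T}. r t)"
  proof (induction T)
    case 0 then show ?case using assms by simp
  next
    case (Suc T)
    have "u (Suc T) \<le> b * u T + r (Suc T)" using assms(3)[of "Suc T"] by simp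
    then show ?case using Suc by (simp add: algebra_simps)
  qed
  moreover have "b * u T \<ge> 0" using assms by simp
  ultimately have "(1 - b) * (\<Sum>t\<in>{1..T}. u t) \<le> (\<Sum>t\<in>{1..T}. r t)" by linarith
  then show ?thesis using assms by (simp add: field_simps)
qed

lemma descent:
  fixes f :: "real^'d \<Rightarrow> real" and grad :: "real^'d \<Rightarrow> real^'d"
  assumes f_deriv: "\<And>x. (f has_derivative (\<lambda>h. grad x \<bullet> h)) (at x)"
    and lip: "\<And>x y. norm (grad x - grad y) \<le> L * norm (x - y)" and L: "L \<ge> 0"
  shows "f y \<le> f x + grad x \<bullet> (y - x) + L * (norm (y - x))\<^sup>2"
proof -
  define p where "p s = x + s *\<^sub>R (y - x)" for s :: real
  have d: "((\<lambda>s. f (p s)) has_derivative (\<lambda>h. grad (p s) \<bullet> (h *\<^sub>R (y - x)))) (at s within S)" for s S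
  proof -
    have "(p has_derivative (\<lambda>h. h *\<^sub>R (y - x))) (at s within S)"
      unfolding p_def by (auto intro!: derivative_eq_intros)
    from has_derivative_compose[OF this f_deriv] show ?thesis by simp
  qed
  have c: "continuous_on {0..1} (\<lambda>s. f (p s))"
    by (rule has_derivative_continuous_on) (use d in blast)
  obtain \<xi> where xi: "0 < \<xi>" "\<xi> < 1" and eq: "f (p 1) - f (p 0) = grad (p \<xi>) \<bullet> ((1 - 0) *\<^sub>R (y - x))"
    using mvt[of 0 1 "\<lambda>s. f (p s)" "\<lambda>s h. grad (p s) \<bullet> (h *\<^sub>R (y - x))"] c d by auto
  have "grad (p \<xi>) \<bullet> (y - x) = grad x \<bullet> (y - x) + (grad (p \<xi>) - grad x) \<bullet> (y - x)"
    by (simp add: inner_diff_left)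
  also have "(grad (p \<xi>) - grad x) \<bullet> (y - x) \<le> norm (grad (p \<xi>) - grad x) * norm (y - x)"
    by (rule norm_cauchy_schwarz)
  also have "\<dots> \<le> L * norm (p \<xi> - x) * norm (y - x)"
    by (intro mult_right_mono lip) auto
  also have "norm (p \<xi> - x) = \<xi> * norm (y - x)" using xi by (simp add: p_def)
  also have "L * (\<xi> * norm (y - x)) * norm (y - x) \<le> L * (norm (y - x))\<^sup>2"
  proof -
    have "\<xi> * (norm (y - x))\<^sup>2 \<le> (norm (y - x))\<^sup>2" using xi by (intro mult_left_le_one_le) auto
    then have "L * (\<xi> * (norm (y - x))\<^sup>2) \<le> L * (norm (y - x))\<^sup>2" using L by (rule mult_left_mono)
    then show ?thesis by (simp add: power2_eq_square mult.assoc)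
  qed
  finally show ?thesis using eq by (simp add: p_def)
qed

definition "PP (beta :: nat \<Rightarrow> real) k t = (\<Prod>j\<in>{k<..t}. beta j)"
definition "WW beta k T = (\<Sum>t\<in>{k..T}. PP beta k t)"

lemma PP_Suc: "k \<le> t \<Longrightarrow> PP beta k (Suc t) = PP beta k t * beta (Suc t)"
proof -
  assume "k \<le> t"
  then have "{k<..Suc t} = insert (Suc t) {k<..t}" by auto
  then show ?thesis unfolding PP_def by (simp add: mult.commute)
qed

lemma PP_same: "PP beta k k = 1" by (simp add: PP_def)

lemma A_unroll1: "A 0 = 0 \<Longrightarrow> A t = (\<Sum>k\<in>{1..t}. PP beta k t * (A k - beta k * A (k - 1)))"
proof (induction t)
  case 0 then show ?case by simp
next
  case (Suc t)
  have "(\<Sum>k\<in>{1..Suc t}. PP beta k (Suc t) * (A k - beta k * A (k - 1)))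
      = (\<Sum>k\<in>{1..t}. PP beta k (Suc t) * (A k - beta k * A (k - 1))) + (A (Suc t) - beta (Suc t) * A t)"
    by (simp add: PP_same)
  also have "(\<Sum>k\<in>{1..t}. PP beta k (Suc t) * (A k - beta k * A (k - 1)))
      = beta (Suc t) * (\<Sum>k\<in>{1..t}. PP beta k t * (A k - beta k * A (k - 1)))"
    by (simp add: sum_distrib_left PP_Suc algebra_simps)
  finally show ?case using Suc by simp
qed

lemma WW_Suc: "k \<le> Suc T \<Longrightarrow> WW beta k (Suc T) = WW beta k T + PP beta k (Suc T)"
  unfolding WW_def by (simp add: sum.cl_ivl_Suc)

lemma A_unroll: "A 0 = 0 \<Longrightarrow> (\<Sum>t\<in>{1..T}. A t) = (\<Sum>k\<in>{1..T}. WW beta k T * (A k - beta k * A (k - 1)))"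
proof (induction T)
  case 0 then show ?case by simp
next
  case (Suc T)
  have "(\<Sum>k\<in>{1..Suc T}. WW beta k (Suc T) * (A k - beta k * A (k - 1)))
     = (\<Sum>k\<in>{1..Suc T}. WW beta k T * (A k - beta k * A (k - 1))) + (\<Sum>k\<in>{1..Suc T}. PP beta k (Suc T) * (A k - beta k * A (k - 1)))"
    by (simp add: WW_Suc sum.distrib[symmetric] algebra_simps)
  also have "(\<Sum>k\<in>{1..Suc T}. WW beta k T * (A k - beta k * A (k - 1))) = (\<Sum>k\<in>{1..T}. WW beta k T * (A k - beta k * A (k - 1)))"
    by (simp add: WW_def)
  also have "(\<Sum>k\<in>{1..Suc T}. PP beta k (Suc T) * (A k - beta k * A (k - 1))) = A (Suc T)"
    using A_unroll1[of A "Suc T" beta, OF Suc.prems] by simp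
  finally show ?case using Suc by simp
qed

lemma geom_bd: fixes b :: real assumes "0 \<le> b" "b < 1" shows "(\<Sum>t\<in>{k..T}. b ^ (t - k)) \<le> 1 / (1 - b)"
proof (cases "k \<le> T")
  case False
  have "0 < 1 - b" using assms by simp
  then show ?thesis using False by simp
next
  case True
  have "(1 - b) * (\<Sum>t\<in>{k..T}. b ^ (t - k)) = 1 - b ^ (Suc T - k)" using True
  proof (induction T rule: dec_induct)
    case base then show ?case by simp
  next
    case (step n)
    have e: "Suc (Suc n) - k = Suc (Suc n - k)" "Suc n - k = Suc (n - k)" using step by auto
    have "(\<Sum>t\<in>{k..Suc n}. b ^ (t - k)) = (\<Sum>t\<in>{k..n}. b ^ (t - k)) + b ^ (Suc n - k)"
      using step by simp
    moreover have "b ^ (Suc (Suc n) - k) = b * b ^ (Suc n - k)" using e by simp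
    moreover have "(1 - b) * (X + P) = (1 - b) * X + P - b * P" for X P :: real by (simp add: algebra_simps)
    ultimately show ?case using step(3) by simp
  qed
  moreover have "0 \<le> b ^ (Suc T - k)" using assms by simp
  ultimately have "(1 - b) * (\<Sum>t\<in>{k..T}. b ^ (t - k)) \<le> 1" by linarith
  then show ?thesis using assms by (simp add: field_simps)
qed

context
  fixes beta :: "nat \<Rightarrow> real" and b1 :: real
  assumes bb: "\<And>t. t \<ge> 1 \<Longrightarrow> 0 \<le> beta t \<and> beta t \<le> b1" and b1: "0 \<le> b1" "b1 < 1"
begin

lemma PP_nonneg: "0 \<le> PP beta k t"
  unfolding PP_def by (intro prod_nonneg) (use bb in auto)

lemma PP_le: "PP beta k t \<le> b1 ^ (t - k)"
proof -
  have "PP beta k t \<le> (\<Prod>j\<in>{k<..t}. b1)" unfolding PP_def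
    by (intro prod_mono) (use bb in auto)
  then show ?thesis by simp
qed

lemma WW_ge: "k \<le> T \<Longrightarrow> 1 \<le> WW beta k T"
proof -
  assume "k \<le> T"
  then have "PP beta k k \<le> WW beta k T" unfolding WW_def
    by (intro member_le_sum PP_nonneg) auto
  then show ?thesis by (simp add: PP_same)
qed

lemma WW_le: "WW beta k T \<le> 1 / (1 - b1)"
proof -
  have "WW beta k T \<le> (\<Sum>t\<in>{k..T}. b1 ^ (t - k))" unfolding WW_def
    by (intro sum_mono PP_le)
  also have "\<dots> \<le> 1 / (1 - b1)" using geom_bd b1 by blast
  finally show ?thesis .
qed

end

definition "XX beta x1 gs n = fst (adafom_state beta x1 gs n)"
definition "MM beta x1 gs n = fst (snd (adafom_state beta x1 gs n))"
definition "VV beta x1 gs n = snd (snd (adafom_state beta x1 gs n))"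
definition "SS (gs :: nat \<Rightarrow> real^'d) t i = (\<Sum>k\<in>{1..t}. (gs k $ i)\<^sup>2)"
definition "DD beta x1 gs t = (\<chi> i. MM beta x1 gs t $ i / sqrt (SS gs t i))"

lemma XX0: "XX beta x1 gs 0 = x1" and MM0: "MM beta x1 gs 0 = 0" and VV0: "VV beta x1 gs 0 = 0"
  by (simp_all add: XX_def MM_def VV_def)

lemma MM_Suc: "MM beta x1 gs (Suc n) = beta (Suc n) *\<^sub>R MM beta x1 gs n + (1 - beta (Suc n)) *\<^sub>R gs (Suc n)"
  by (simp add: MM_def Let_def split: prod.split)

lemma VV_Suc: "VV beta x1 gs (Suc n) = (1 - 1 / real (Suc n)) *\<^sub>R VV beta x1 gs n + (1 / real (Suc n)) *\<^sub>R (\<chi> i. (gs (Suc n) $ i)\<^sup>2)"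
  by (simp add: VV_def Let_def split: prod.split)

lemma XX_Suc: "XX beta x1 gs (Suc n) = XX beta x1 gs n - (1 / sqrt (real (Suc n))) *\<^sub>R (\<chi> i. MM beta x1 gs (Suc n) $ i / sqrt (VV beta x1 gs (Suc n) $ i))"
  by (simp add: XX_def MM_def VV_def Let_def split: prod.split)

lemma VV_SS: "VV beta x1 gs t $ i = SS gs t i / real t"
proof (induction t)
  case 0 then show ?case by (simp add: VV0 SS_def)
next
  case (Suc n)
  have "SS gs (Suc n) i = SS gs n i + (gs (Suc n) $ i)\<^sup>2" by (simp add: SS_def)
  then show ?case using Suc
  proof (cases "n = 0")
    case True then show ?thesis using Suc by (simp add: VV_Suc SS_def)
  next
    case False
    have e: "(1 - 1/(real n+1)) * (S/real n) + (1/(real n+1)) * q = (S+q)/(real n+1)" for S q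
    proof -
      have a: "1 - 1/(real n+1) = real n/(real n+1)" by (simp add: field_simps)
      have b: "real n/(real n+1) * (S/real n) = S/(real n+1)" using False by simp
      show ?thesis unfolding a b by (simp add: add_divide_distrib)
    qed
    show ?thesis using Suc \<open>SS gs (Suc n) i = _\<close> e[of "SS gs n i" "(gs (Suc n) $ i)\<^sup>2"]
      by (simp add: VV_Suc add.commute)
  qed
qed

lemma XX_step: "XX beta x1 gs (Suc n) = XX beta x1 gs n - DD beta x1 gs (Suc n)"
proof -
  have "(1 / sqrt (real (Suc n))) *\<^sub>R (\<chi> i. MM beta x1 gs (Suc n) $ i / sqrt (VV beta x1 gs (Suc n) $ i))
     = DD beta x1 gs (Suc n)"
    unfolding DD_def VV_SS
    by (simp add: vec_eq_iff real_sqrt_divide)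
  then show ?thesis by (simp add: XX_Suc)
qed

lemma adafom_x_XX: "adafom_x beta x1 gs t = XX beta x1 gs (t - 1)"
  by (simp add: adafom_x_def XX_def)

lemma state_meas:
  fixes g :: "nat \<Rightarrow> 'a \<Rightarrow> real^'d"
  assumes "\<And>s. 1 \<le> s \<Longrightarrow> s \<le> n \<Longrightarrow> g s \<in> borel_measurable N"
  shows "(\<lambda>w. XX beta x1 (\<lambda>s. g s w) n) \<in> borel_measurable N \<and>
         (\<lambda>w. MM beta x1 (\<lambda>s. g s w) n) \<in> borel_measurable N \<and>
         (\<lambda>w. VV beta x1 (\<lambda>s. g s w) n) \<in> borel_measurable N"
  using assms
proof (induction n)
  case 0 then show ?case by (simp add: XX0 MM0 VV0)
next
  case (Suc n)
  then have IH: "(\<lambda>w. XX beta x1 (\<lambda>s. g s w) n) \<in> borel_measurable N"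
         "(\<lambda>w. MM beta x1 (\<lambda>s. g s w) n) \<in> borel_measurable N"
         "(\<lambda>w. VV beta x1 (\<lambda>s. g s w) n) \<in> borel_measurable N" by auto
  have gS: "g (Suc n) \<in> borel_measurable N" using Suc.prems by auto
  have m: "(\<lambda>w. MM beta x1 (\<lambda>s. g s w) (Suc n)) \<in> borel_measurable N"
    unfolding MM_Suc using IH gS by measurable
  have v: "(\<lambda>w. VV beta x1 (\<lambda>s. g s w) (Suc n)) \<in> borel_measurable N"
  proof -
    have "(\<lambda>w. \<chi> i. (g (Suc n) w $ i)\<^sup>2) \<in> borel_measurable N"
      by (rule vec_meas) (use gS in measurable)
    then show ?thesis unfolding VV_Suc using IH by measurable
  qed
  have "(\<lambda>w. (\<chi> i. MM beta x1 (\<lambda>s. g s w) (Suc n) $ i / sqrt (VV beta x1 (\<lambda>s. g s w) (Suc n) $ i))) \<in> borel_measurable N"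
    using m v by (intro vec_meas borel_measurable_divide sqrt_meas vec_nth_meas)
  then have x: "(\<lambda>w. XX beta x1 (\<lambda>s. g s w) (Suc n)) \<in> borel_measurable N"
    unfolding XX_Suc using IH by measurable
  show ?case using m v x by blast
qed


lemma norm_le_compwise: fixes v w :: "real^'n"
  assumes "\<And>i. \<bar>v $ i\<bar> \<le> \<bar>w $ i\<bar>" shows "norm v \<le> norm w"
proof -
  have "(norm v)\<^sup>2 \<le> (norm w)\<^sup>2" unfolding norm2_vec
    using assms abs_le_square_iff by (intro sum_mono) blast
  then show ?thesis by (rule power2_le_imp_le) simp
qed




definition "ETA (gs :: nat \<Rightarrow> real^'d) t i = 1 / sqrt (SS gs t i)"

context
  fixes gs :: "nat \<Rightarrow> real^'d" and H c b1 :: real and beta :: "nat \<Rightarrow> real" and x1 :: "real^'d"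
    and f :: "real^'d \<Rightarrow> real" and grad :: "real^'d \<Rightarrow> real^'d" and L fmin :: real
  assumes gb: "\<And>t. t \<ge> 1 \<Longrightarrow> norm (gs t) \<le> H"
    and gc: "\<And>i. \<bar>gs 1 $ i\<bar> \<ge> c"
    and cpos: "c > 0"
    and bb: "\<And>t. t \<ge> 1 \<Longrightarrow> 0 \<le> beta t \<and> beta t \<le> b1"
    and b1: "0 \<le> b1" "b1 < 1"
    and grad_bd: "\<And>x. norm (grad x) \<le> H"
    and lip: "\<And>x y. norm (grad x - grad y) \<le> L * norm (x - y)" and L: "L \<ge> 0"
    and f_deriv: "\<And>x. (f has_derivative (\<lambda>h. grad x \<bullet> h)) (at x)"
    and fmin: "\<And>x. fmin \<le> f x"
begin

lemma H_ge_c: "c \<le> H"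
  using gc[of undefined] component_le_norm_cart[of "gs 1" undefined] gb[of 1] by linarith

lemma g_comp_bd: "t \<ge> 1 \<Longrightarrow> \<bar>gs t $ i\<bar> \<le> H"
  using component_le_norm_cart[of "gs t" i] gb[of t] by linarith

lemma g_sq_bd: "t \<ge> 1 \<Longrightarrow> (gs t $ i)\<^sup>2 \<le> H\<^sup>2"
  using g_comp_bd[of t i] by (metis abs_ge_zero power2_abs power_mono)

lemma SS_ge: "t \<ge> 1 \<Longrightarrow> c\<^sup>2 \<le> SS gs t i"
proof -
  assume t: "t \<ge> 1"
  have "c\<^sup>2 \<le> (gs 1 $ i)\<^sup>2" using gc[of i] cpos by (metis less_imp_le power2_abs power_mono)
  also have "\<dots> \<le> SS gs t i" unfolding SS_def using t
    by (intro member_le_sum) auto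
  finally show ?thesis .
qed

lemma SS_pos: "t \<ge> 1 \<Longrightarrow> 0 < SS gs t i"
  using SS_ge[of t i] cpos by (smt (verit) zero_less_power)

lemma SS_nonneg: "0 \<le> SS gs t i"
  unfolding SS_def by (intro sum_nonneg) auto

lemma SS_le: "SS gs t i \<le> real t * H\<^sup>2"
proof -
  have "SS gs t i \<le> real (card {1..t}) * H\<^sup>2" unfolding SS_def
    by (intro sum_bounded_above) (auto intro: g_sq_bd)
  then show ?thesis by simp
qed

lemma SS_Suc: "SS gs (Suc t) i = SS gs t i + (gs (Suc t) $ i)\<^sup>2"
  by (simp add: SS_def)

lemma SS_mono: "SS gs t i \<le> SS gs (Suc t) i"
  by (simp add: SS_Suc)

lemma SS_mono': "s \<le> t \<Longrightarrow> SS gs s i \<le> SS gs t i"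
  by (induction t rule: dec_induct) (auto intro: order_trans[OF _ SS_mono])

lemma MM_bd: "\<bar>MM beta x1 gs t $ i\<bar> \<le> H"
proof (induction t)
  case 0 then show ?case using H_ge_c cpos by (simp add: MM0)
next
  case (Suc n)
  have b: "0 \<le> beta (Suc n)" "beta (Suc n) \<le> 1" using bb[of "Suc n"] b1 by auto
  have "\<bar>MM beta x1 gs (Suc n) $ i\<bar> \<le> beta (Suc n) * \<bar>MM beta x1 gs n $ i\<bar> + (1 - beta (Suc n)) * \<bar>gs (Suc n) $ i\<bar>"
  proof -
    have "MM beta x1 gs (Suc n) $ i = beta (Suc n) * MM beta x1 gs n $ i + (1 - beta (Suc n)) * gs (Suc n) $ i"
      by (simp add: MM_Suc)
    also have "\<bar>\<dots>\<bar> \<le> \<bar>beta (Suc n) * MM beta x1 gs n $ i\<bar> + \<bar>(1 - beta (Suc n)) * gs (Suc n) $ i\<bar>"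
      by (rule abs_triangle_ineq)
    finally show ?thesis using b by (simp add: abs_mult)
  qed
  also have "\<dots> \<le> beta (Suc n) * H + (1 - beta (Suc n)) * H"
    using b Suc.IH g_comp_bd[of "Suc n" i] by (intro add_mono mult_left_mono) auto
  finally show ?case by (simp add: algebra_simps)
qed

lemma DD0: "DD beta x1 gs 0 = 0"
  by (simp add: DD_def MM0 vec_eq_iff)

lemma DD_bd: "t \<ge> 1 \<Longrightarrow> \<bar>DD beta x1 gs t $ i\<bar> \<le> H / c"
proof -
  assume t: "t \<ge> 1"
  have s: "c \<le> sqrt (SS gs t i)" using SS_ge[OF t, of i] cpos real_le_rsqrt by blast
  have "\<bar>DD beta x1 gs t $ i\<bar> = \<bar>MM beta x1 gs t $ i\<bar> / sqrt (SS gs t i)"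
    by (simp add: DD_def abs_div SS_nonneg)
  also have "\<dots> \<le> H / c" using s cpos MM_bd[of t i] H_ge_c
    by (intro frac_le) auto
  finally show ?thesis .
qed

lemma u_rec: assumes t: "t \<ge> 1"
  shows "(MM beta x1 gs t $ i)\<^sup>2 / SS gs t i \<le> b1 * ((MM beta x1 gs (t-1) $ i)\<^sup>2 / SS gs (t-1) i) + (gs t $ i)\<^sup>2 / SS gs t i"
proof -
  obtain n where n: "t = Suc n" using t by (cases t) auto
  define m where "m = MM beta x1 gs n $ i"
  define q where "q = gs (Suc n) $ i"
  define b where "b = beta (Suc n)"
  have b: "0 \<le> b" "b \<le> b1" using bb[of "Suc n"] by (auto simp: b_def)
  have St: "0 < SS gs (Suc n) i" using SS_pos by simp
  have e: "MM beta x1 gs (Suc n) $ i = b * m + (1 - b) * q" by (simp add: MM_Suc m_def q_def b_def)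
  have conv: "(b * m + (1 - b) * q)\<^sup>2 \<le> b * m\<^sup>2 + (1 - b) * q\<^sup>2"
  proof -
    have "b * m\<^sup>2 + (1 - b) * q\<^sup>2 - (b * m + (1 - b) * q)\<^sup>2 = b * (1 - b) * (m - q)\<^sup>2"
      by (simp add: power2_eq_square algebra_simps)
    moreover have "b * (1 - b) * (m - q)\<^sup>2 \<ge> 0" using b b1 by simp
    ultimately show ?thesis by linarith
  qed
  have "(MM beta x1 gs t $ i)\<^sup>2 / SS gs t i \<le> (b * m\<^sup>2 + (1 - b) * q\<^sup>2) / SS gs (Suc n) i"
    using conv St by (simp add: n e divide_right_mono)
  also have "\<dots> = b * (m\<^sup>2 / SS gs (Suc n) i) + (1 - b) * (q\<^sup>2 / SS gs (Suc n) i)"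
    by (simp add: add_divide_distrib)
  also have "\<dots> \<le> b1 * (m\<^sup>2 / SS gs n i) + q\<^sup>2 / SS gs (Suc n) i"
  proof (intro add_mono)
    show "b * (m\<^sup>2 / SS gs (Suc n) i) \<le> b1 * (m\<^sup>2 / SS gs n i)"
    proof (cases "n = 0")
      case True then show ?thesis by (simp add: m_def MM0)
    next
      case False
      then have "0 < SS gs n i" using SS_pos by simp
      then have "m\<^sup>2 / SS gs (Suc n) i \<le> m\<^sup>2 / SS gs n i"
        by (intro divide_left_mono SS_mono) (use St in auto)
      then show ?thesis using b St by (meson divide_nonneg_nonneg mult_mono zero_le_power2 order_trans SS_nonneg)
    qed
    show "(1 - b) * (q\<^sup>2 / SS gs (Suc n) i) \<le> q\<^sup>2 / SS gs (Suc n) i"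
      by (rule mult_left_le_one_le) (use b b1 St in auto)
  qed
  finally show ?thesis by (simp add: n m_def q_def)
qed

lemma log_sum: "T \<ge> 1 \<Longrightarrow> (\<Sum>t\<in>{1..T}. (gs t $ i)\<^sup>2 / SS gs t i) \<le> 1 + ln (SS gs T i) - ln (SS gs 1 i)"
proof (induction T rule: dec_induct)
  case base
  have "SS gs 1 i = (gs 1 $ i)\<^sup>2" by (simp add: SS_def)
  then show ?case using SS_pos[of 1 i] by simp
next
  case (step T)
  define a where "a = SS gs T i"
  define q where "q = (gs (Suc T) $ i)\<^sup>2"
  have a: "0 < a" using SS_pos step by (simp add: a_def)
  have q: "0 \<le> q" by (simp add: q_def)
  have "q / (a + q) \<le> ln (a + q) - ln a"
  proof -
    have "ln (a / (a + q)) \<le> a / (a + q) - 1" using a q by (intro ln_le_minus_one) simp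
    moreover have "ln (a / (a + q)) = ln a - ln (a + q)" using a q by (simp add: ln_div)
    moreover have "a / (a + q) - 1 = - (q / (a + q))" using a q by (simp add: field_simps)
    ultimately show ?thesis by linarith
  qed
  then have "(gs (Suc T) $ i)\<^sup>2 / SS gs (Suc T) i \<le> ln (SS gs (Suc T) i) - ln (SS gs T i)"
    by (simp add: SS_Suc a_def q_def)
  then show ?case using step by simp
qed

lemma DD_sum: assumes T: "T \<ge> 1"
  shows "(\<Sum>t\<in>{1..T}. (norm (DD beta x1 gs t))\<^sup>2)
     \<le> real CARD('d) / (1 - b1) * (1 + ln (real T) + ln (H\<^sup>2) - ln (c\<^sup>2))"
proof -
  define u where "u i t = (MM beta x1 gs t $ i)\<^sup>2 / SS gs t i" for i :: 'd and t
  have Dsq: "(DD beta x1 gs t $ i)\<^sup>2 = u i t" for t i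
    by (simp add: DD_def u_def power_divide SS_nonneg)
  have per: "(\<Sum>t\<in>{1..T}. u i t) \<le> (1 + ln (real T) + ln (H\<^sup>2) - ln (c\<^sup>2)) / (1 - b1)" for i
  proof -
    have "(\<Sum>t\<in>{1..T}. u i t) \<le> (\<Sum>t\<in>{1..T}. (gs t $ i)\<^sup>2 / SS gs t i) / (1 - b1)"
    proof (rule rec_sum)
      show "u i 0 = 0" by (simp add: u_def MM0)
      show "0 \<le> u i t" for t by (simp add: u_def SS_nonneg)
      show "u i t \<le> b1 * u i (t - 1) + (gs t $ i)\<^sup>2 / SS gs t i" if "t \<ge> 1" for t
        using u_rec[OF that] by (simp add: u_def)
    qed (use b1 in auto)
    also have "\<dots> \<le> (1 + ln (real T) + ln (H\<^sup>2) - ln (c\<^sup>2)) / (1 - b1)"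
    proof (rule divide_right_mono)
      have "ln (SS gs T i) \<le> ln (real T * H\<^sup>2)"
        using SS_pos[OF T, of i] SS_le[of T i] by (subst ln_le_cancel_iff) auto
      also have "\<dots> = ln (real T) + ln (H\<^sup>2)" using T H_ge_c cpos by (simp add: ln_mult)
      finally have 1: "ln (SS gs T i) \<le> ln (real T) + ln (H\<^sup>2)" .
      have 2: "ln (c\<^sup>2) \<le> ln (SS gs 1 i)" using SS_ge[of 1 i] cpos SS_pos[of 1 i] by (subst ln_le_cancel_iff) auto
      show "(\<Sum>t\<in>{1..T}. (gs t $ i)\<^sup>2 / SS gs t i) \<le> 1 + ln (real T) + ln (H\<^sup>2) - ln (c\<^sup>2)"
        using log_sum[OF T, of i] 1 2 by linarith
    qed (use b1 in simp)
    finally show ?thesis .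
  qed
  have "(\<Sum>t\<in>{1..T}. (norm (DD beta x1 gs t))\<^sup>2) = (\<Sum>i\<in>UNIV. \<Sum>t\<in>{1..T}. u i t)"
  proof -
    have "(\<Sum>t\<in>{1..T}. (norm (DD beta x1 gs t))\<^sup>2) = (\<Sum>t\<in>{1..T}. \<Sum>i\<in>UNIV. u i t)"
      by (simp add: norm2_vec Dsq)
    also have "\<dots> = (\<Sum>i\<in>UNIV. \<Sum>t\<in>{1..T}. u i t)" by (rule sum.swap)
    finally show ?thesis .
  qed
  also have "\<dots> \<le> (\<Sum>i\<in>(UNIV::'d set). (1 + ln (real T) + ln (H\<^sup>2) - ln (c\<^sup>2)) / (1 - b1))"
    by (intro sum_mono per)
  finally show ?thesis by simp
qed

abbreviation "xx t \<equiv> adafom_x beta x1 gs t"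
abbreviation "AA t \<equiv> grad (xx t) \<bullet> DD beta x1 gs t"

lemma xx_step: "t \<ge> 1 \<Longrightarrow> xx (Suc t) = xx t - DD beta x1 gs t"
  using XX_step[of beta x1 gs "t - 1"] by (simp add: adafom_x_XX)

lemma AA0: "AA 0 = 0" unfolding DD0 by (rule inner_zero_right)

lemma descent_sum: "(\<Sum>t\<in>{1..T}. AA t) \<le> f x1 - fmin + L * (\<Sum>t\<in>{1..T}. (norm (DD beta x1 gs t))\<^sup>2)"
proof -
  have "f (xx (Suc T)) + (\<Sum>t\<in>{1..T}. AA t) \<le> f x1 + L * (\<Sum>t\<in>{1..T}. (norm (DD beta x1 gs t))\<^sup>2)"
  proof (induction T)
    case 0 then show ?case by (simp add: adafom_x_XX XX0)
  next
    case (Suc T)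
    have "f (xx (Suc (Suc T))) \<le> f (xx (Suc T)) + grad (xx (Suc T)) \<bullet> (xx (Suc (Suc T)) - xx (Suc T))
        + L * (norm (xx (Suc (Suc T)) - xx (Suc T)))\<^sup>2"
      by (rule descent[OF f_deriv lip L])
    also have "xx (Suc (Suc T)) - xx (Suc T) = - DD beta x1 gs (Suc T)" using xx_step[of "Suc T"] by simp
    finally have "f (xx (Suc (Suc T))) \<le> f (xx (Suc T)) - AA (Suc T) + L * (norm (DD beta x1 gs (Suc T)))\<^sup>2"
      by simp
    then show ?case using Suc by (simp add: algebra_simps)
  qed
  then show ?thesis using fmin[of "xx (Suc T)"] by linarith
qed

lemma grad_comp: "\<bar>grad x $ i\<bar> \<le> H"
  using component_le_norm_cart[of "grad x" i] grad_bd[of x] by linarith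

lemma ETA_nonneg: "0 \<le> ETA gs t i" by (simp add: ETA_def SS_nonneg)

lemma ETA_anti: "t \<ge> 1 \<Longrightarrow> ETA gs (Suc t) i \<le> ETA gs t i"
  unfolding ETA_def using SS_pos[of t i] SS_mono[of t i]
  by (intro divide_left_mono) auto

lemma DD_ETA: "DD beta x1 gs t $ i = MM beta x1 gs t $ i * ETA gs t i"
  by (simp add: DD_def ETA_def)

lemma D_ineq: assumes k: "k \<ge> 2"
  shows "AA k - beta k * AA (k - 1) \<ge> (1 - beta k) * (\<Sum>i\<in>UNIV. grad (xx k) $ i * ETA gs (k - 1) i * gs k $ i)
     - (L * (norm (DD beta x1 gs (k - 1)))\<^sup>2 + 2 * H\<^sup>2 * (\<Sum>i\<in>UNIV. ETA gs (k - 1) i - ETA gs k i))"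
proof -
  obtain n where n: "k = Suc n" "n \<ge> 1" using k by (cases k) auto
  define a where "a = grad (xx k)"
  define a' where "a' = grad (xx n)"
  define m where "m = MM beta x1 gs n"
  define g where "g = gs k"
  define e where "e i = ETA gs k i" for i
  define e' where "e' i = ETA gs n i" for i
  define b where "b = beta k"
  define v where "v = (\<chi> i. m $ i * e i)"
  have b: "0 \<le> b" "b \<le> 1" using bb[of k] b1 k by (auto simp: b_def)
  have ee: "e i \<le> e' i" for i using ETA_anti[OF n(2)] by (simp add: e_def e'_def n)
  have e0: "0 \<le> e i" for i by (simp add: e_def ETA_nonneg)
  have Dk: "DD beta x1 gs k $ i = (b * m $ i + (1 - b) * g $ i) * e i" for i
    by (simp add: DD_ETA n MM_Suc m_def g_def e_def b_def)
  have Dn: "DD beta x1 gs n $ i = m $ i * e' i" for i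
    by (simp add: DD_ETA m_def e'_def)
  have iden: "AA k - b * AA (k - 1) = b * ((a - a') \<bullet> v)
      + (\<Sum>i\<in>UNIV. b * a' $ i * m $ i * (e i - e' i) + (1 - b) * a $ i * g $ i * e i)"
  proof -
    have "AA k - b * AA (k - 1) = (\<Sum>i\<in>UNIV. a $ i * ((b * m $ i + (1 - b) * g $ i) * e i) - b * (a' $ i * (m $ i * e' i)))"
    proof -
      have 1: "AA k = (\<Sum>i\<in>UNIV. a $ i * ((b * m $ i + (1 - b) * g $ i) * e i))"
        unfolding inner_vec_def inner_real_def a_def Dk ..
      have kn: "k - 1 = n" using n by simp
      have 2: "AA (k - 1) = (\<Sum>i\<in>UNIV. a' $ i * (m $ i * e' i))"
        unfolding kn inner_vec_def inner_real_def a'_def Dn ..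
      show ?thesis unfolding 1 2 sum_distrib_left sum_subtractf[symmetric] ..
    qed
    also have "\<dots> = (\<Sum>i\<in>UNIV. b * ((a $ i - a' $ i) * (m $ i * e i)) + (b * a' $ i * m $ i * (e i - e' i) + (1 - b) * a $ i * g $ i * e i))"
      by (intro sum.cong) (auto simp: algebra_simps)
    also have "\<dots> = b * ((a - a') \<bullet> v) + (\<Sum>i\<in>UNIV. b * a' $ i * m $ i * (e i - e' i) + (1 - b) * a $ i * g $ i * e i)"
      by (simp add: sum.distrib inner_vec_def v_def sum_distrib_left)
    finally show ?thesis .
  qed
  have nv: "norm v \<le> norm (DD beta x1 gs n)"
  proof (rule norm_le_compwise)
    fix i
    have "\<bar>m $ i * e i\<bar> \<le> \<bar>m $ i * e' i\<bar>" using ee[of i] e0[of i]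
      by (simp add: abs_mult mult_left_mono)
    then show "\<bar>v $ i\<bar> \<le> \<bar>DD beta x1 gs n $ i\<bar>" by (simp add: v_def Dn)
  qed
  have xd: "xx k - xx n = - DD beta x1 gs n" using xx_step[OF n(2)] n(1) by simp
  have na: "norm (a - a') \<le> L * norm (DD beta x1 gs n)"
    using lip[of "xx k" "xx n"] unfolding xd a_def a'_def by simp
  have "norm (a - a') * norm v \<le> L * norm (DD beta x1 gs n) * norm (DD beta x1 gs n)"
    by (rule mult_mono[OF na nv]) (use L in auto)
  moreover have "- (norm (a - a') * norm v) \<le> (a - a') \<bullet> v"
    using abs_le_D2[OF Cauchy_Schwarz_ineq2[of "a - a'" v]] by linarith
  moreover have "L * norm (DD beta x1 gs n) * norm (DD beta x1 gs n) = L * (norm (DD beta x1 gs n))\<^sup>2"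
    by (simp add: power2_eq_square)
  ultimately have T1: "(a - a') \<bullet> v \<ge> - (L * (norm (DD beta x1 gs n))\<^sup>2)"
    by linarith
  have T1': "b * ((a - a') \<bullet> v) \<ge> - (L * (norm (DD beta x1 gs n))\<^sup>2)"
  proof -
    have "0 \<le> L * (norm (DD beta x1 gs n))\<^sup>2" using L by simp
    then have "b * (- (L * (norm (DD beta x1 gs n))\<^sup>2)) \<ge> - (L * (norm (DD beta x1 gs n))\<^sup>2)"
      using b by (simp add: mult_left_le_one_le)
    moreover have "b * ((a - a') \<bullet> v) \<ge> b * (- (L * (norm (DD beta x1 gs n))\<^sup>2))"
      using T1 b by (intro mult_left_mono) auto
    ultimately show ?thesis by linarith
  qed
  have T2: "b * a' $ i * m $ i * (e i - e' i) + (1 - b) * a $ i * g $ i * e i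
      \<ge> (1 - b) * (a $ i * e' i * g $ i) - 2 * H\<^sup>2 * (e' i - e i)" for i
  proof -
    have d: "0 \<le> e' i - e i" using ee[of i] by simp
    have ba: "\<bar>b * a' $ i * m $ i\<bar> \<le> H\<^sup>2"
    proof -
      have "\<bar>b * a' $ i * m $ i\<bar> = b * (\<bar>a' $ i\<bar> * \<bar>m $ i\<bar>)" using b by (simp add: abs_mult)
      also have "\<dots> \<le> 1 * (H * H)"
        using b grad_comp[of "xx n" i] MM_bd[of n i]
        by (intro mult_mono) (auto simp: a'_def m_def)
      finally show ?thesis by (simp add: power2_eq_square)
    qed
    have ag: "\<bar>(1 - b) * a $ i * g $ i\<bar> \<le> H\<^sup>2"
    proof -
      have "\<bar>(1 - b) * a $ i * g $ i\<bar> = (1 - b) * (\<bar>a $ i\<bar> * \<bar>g $ i\<bar>)" using b by (simp add: abs_mult)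
      also have "\<dots> \<le> 1 * (H * H)"
        using b grad_comp[of "xx k" i] g_comp_bd[of k i] k
        by (intro mult_mono) (auto simp: a_def g_def)
      finally show ?thesis by (simp add: power2_eq_square)
    qed
    have 1: "b * a' $ i * m $ i * (e i - e' i) \<ge> - (H\<^sup>2 * (e' i - e i))"
    proof -
      have "(b * a' $ i * m $ i) \<le> H\<^sup>2" using ba by linarith
      then have "(b * a' $ i * m $ i) * (e' i - e i) \<le> H\<^sup>2 * (e' i - e i)" using d by (rule mult_right_mono)
      then show ?thesis by (simp add: algebra_simps)
    qed
    have 2: "(1 - b) * a $ i * g $ i * (e i - e' i) \<ge> - (H\<^sup>2 * (e' i - e i))"
    proof -
      have "((1 - b) * a $ i * g $ i) \<le> H\<^sup>2" using ag by linarith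
      then have "((1 - b) * a $ i * g $ i) * (e' i - e i) \<le> H\<^sup>2 * (e' i - e i)" using d by (rule mult_right_mono)
      then show ?thesis by (simp add: algebra_simps)
    qed
    have "(1 - b) * a $ i * g $ i * e i = (1 - b) * (a $ i * e' i * g $ i) + (1 - b) * a $ i * g $ i * (e i - e' i)"
      by (simp add: algebra_simps)
    then show ?thesis using 1 2 by (simp add: algebra_simps)
  qed
  have "(\<Sum>i\<in>UNIV. b * a' $ i * m $ i * (e i - e' i) + (1 - b) * a $ i * g $ i * e i)
      \<ge> (\<Sum>i\<in>UNIV. (1 - b) * (a $ i * e' i * g $ i) - 2 * H\<^sup>2 * (e' i - e i))"
    by (intro sum_mono T2)
  also have "(\<Sum>i\<in>UNIV. (1 - b) * (a $ i * e' i * g $ i) - 2 * H\<^sup>2 * (e' i - e i))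
     = (1 - b) * (\<Sum>i\<in>UNIV. a $ i * e' i * g $ i) - 2 * H\<^sup>2 * (\<Sum>i\<in>UNIV. e' i - e i)"
    by (simp only: sum_distrib_left sum_subtractf[symmetric])
  finally show ?thesis using iden T1'
    by (simp add: a_def e'_def e_def g_def b_def n)
qed

abbreviation "GG k \<equiv> (\<Sum>i\<in>UNIV. grad (xx k) $ i * ETA gs (k - 1) i * gs k $ i)"

lemma AA1_bd: "\<bar>AA 1\<bar> \<le> real CARD('d) * H * H / c"
proof -
  have "\<bar>AA 1\<bar> \<le> (\<Sum>i\<in>UNIV. \<bar>grad (xx 1) $ i * DD beta x1 gs 1 $ i\<bar>)"
    unfolding inner_vec_def inner_real_def by (rule sum_abs)
  also have "\<dots> \<le> (\<Sum>i\<in>(UNIV::'d set). H * (H / c))"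
    unfolding abs_mult using grad_comp DD_bd[of 1] H_ge_c cpos
    by (intro sum_mono mult_mono) auto
  finally show ?thesis by simp
qed

lemma ETA1_bd: "ETA gs 1 i \<le> 1 / c"
proof -
  have s: "c \<le> sqrt (SS gs 1 i)" using SS_ge[of 1 i] cpos real_le_rsqrt by blast
  have "0 < sqrt (SS gs 1 i)" using s cpos by linarith
  then have "0 < sqrt (SS gs 1 i) * c" using cpos by simp
  then show ?thesis unfolding ETA_def using s by (intro divide_left_mono) auto
qed

lemma ETA_bd: assumes t: "t \<ge> 1" shows "ETA gs t i \<le> 1 / c"
proof -
  have s: "c \<le> sqrt (SS gs t i)" using SS_ge[OF t, of i] cpos real_le_rsqrt by blast
  have "0 < sqrt (SS gs t i)" using s cpos by linarith
  then have "0 < sqrt (SS gs t i) * c" using cpos by simp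
  then show ?thesis unfolding ETA_def using s by (intro divide_left_mono) auto
qed

lemma ETA_lb: assumes t: "t \<ge> 1" "t \<le> T" shows "1 / (H * sqrt (real T)) \<le> ETA gs t i"
proof -
  have p: "0 < SS gs t i" using SS_pos[OF t(1)] .
  have "SS gs t i \<le> real T * H\<^sup>2" using SS_le[of t i] t(2) H_ge_c cpos
    by (meson of_nat_le_iff order_trans mult_right_mono zero_le_power2)
  then have "sqrt (SS gs t i) \<le> sqrt (real T * H\<^sup>2)" by simp
  also have "\<dots> = H * sqrt (real T)" using H_ge_c cpos by (simp add: real_sqrt_mult mult.commute)
  finally have le: "sqrt (SS gs t i) \<le> H * sqrt (real T)" .
  have q: "0 < sqrt (SS gs t i)" using p by simp
  then have "0 < H * sqrt (real T)" using le by linarith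
  then have pos: "0 < H * sqrt (real T) * sqrt (SS gs t i)" using q by (rule mult_pos_pos)
  show ?thesis unfolding ETA_def by (intro divide_left_mono) (use pos le in auto)
qed

lemma WW_ge': "k \<le> T \<Longrightarrow> 1 \<le> WW beta k T"
  using WW_ge[of beta b1 k T] bb b1 by blast

lemma WW_le': "WW beta k T \<le> 1 / (1 - b1)"
  using WW_le[of beta b1 k T] bb b1 by blast

lemma path_bound: assumes T: "T \<ge> 1"
  shows "(\<Sum>k\<in>{2..T}. WW beta k T * (1 - beta k) * GG k)
    \<le> (f x1 - fmin) + L * (real CARD('d) / (1 - b1) * (1 + ln (real T) + ln (H\<^sup>2) - ln (c\<^sup>2)))
      + (real CARD('d) * H * H / c + L * (real CARD('d) / (1 - b1) * (1 + ln (real T) + ln (H\<^sup>2) - ln (c\<^sup>2)))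
         + 2 * H\<^sup>2 * (real CARD('d) / c)) / (1 - b1)"
proof -
  define d where "d = real CARD('d)"
  define Dl where "Dl = d / (1 - b1) * (1 + ln (real T) + ln (H\<^sup>2) - ln (c\<^sup>2))"
  define E where "E k = L * (norm (DD beta x1 gs (k - 1)))\<^sup>2 + 2 * H\<^sup>2 * (\<Sum>i\<in>UNIV. ETA gs (k - 1) i - ETA gs k i)" for k
  have b1': "0 < 1 - b1" using b1 by simp
  have E0: "E k \<ge> 0" if "k \<ge> 2" for k
  proof -
    have "ETA gs k i \<le> ETA gs (k - 1) i" for i using ETA_anti[of "k - 1" i] that by simp
    then have "0 \<le> (\<Sum>i\<in>UNIV. ETA gs (k - 1) i - ETA gs k i)" by (intro sum_nonneg) auto
    then show ?thesis unfolding E_def using L by simp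
  qed
  have DS: "(\<Sum>t\<in>{1..T}. (norm (DD beta x1 gs t))\<^sup>2) \<le> Dl"
    unfolding Dl_def d_def by (rule DD_sum[OF T])
  obtain n where n: "T = Suc n" using T by (cases T) auto
  have sumE: "(\<Sum>k\<in>{2..T}. E k) \<le> L * Dl + 2 * H\<^sup>2 * (d / c)"
  proof -
    have "(\<Sum>k\<in>{2..T}. E k) = L * (\<Sum>k\<in>{2..T}. (norm (DD beta x1 gs (k - 1)))\<^sup>2)
       + 2 * H\<^sup>2 * (\<Sum>k\<in>{2..T}. \<Sum>i\<in>UNIV. ETA gs (k - 1) i - ETA gs k i)"
      unfolding E_def by (simp add: sum.distrib sum_distrib_left)
    also have "(\<Sum>k\<in>{2..T}. (norm (DD beta x1 gs (k - 1)))\<^sup>2) = (\<Sum>t\<in>{1..n}. (norm (DD beta x1 gs t))\<^sup>2)"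
      unfolding n numeral_2_eq_2 sum.shift_bounds_cl_Suc_ivl by simp
    also have "\<dots> \<le> (\<Sum>t\<in>{1..T}. (norm (DD beta x1 gs t))\<^sup>2)"
      unfolding n by (intro sum_mono2) auto
    also have "(\<Sum>k\<in>{2..T}. \<Sum>i\<in>UNIV. ETA gs (k - 1) i - ETA gs k i) = (\<Sum>i\<in>UNIV. \<Sum>k\<in>{2..T}. ETA gs (k - 1) i - ETA gs k i)"
      by (rule sum.swap)
    also have "\<dots> = (\<Sum>i\<in>UNIV. ETA gs 1 i - ETA gs T i)"
    proof (intro sum.cong refl)
      fix i
      have "(\<Sum>k\<in>{2..T}. ETA gs (k - 1) i - ETA gs k i) = (\<Sum>k\<in>{1..n}. ETA gs k i - ETA gs (Suc k) i)"
        unfolding n numeral_2_eq_2 sum.shift_bounds_cl_Suc_ivl by simp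
      also have "\<dots> = - (\<Sum>k\<in>{1..n}. ETA gs (Suc k) i - ETA gs k i)"
        by (simp add: sum_negf[symmetric])
      also have "\<dots> = ETA gs 1 i - ETA gs T i"
        using sum_Suc_diff[of 1 n "\<lambda>k. ETA gs k i"] n by simp
      finally show "(\<Sum>k\<in>{2..T}. ETA gs (k - 1) i - ETA gs k i) = ETA gs 1 i - ETA gs T i" .
    qed
    also have "\<dots> \<le> (\<Sum>i\<in>(UNIV::'d set). 1 / c)"
      using ETA1_bd ETA_nonneg by (intro sum_mono) (smt (verit))
    also have "\<dots> = d / c" by (simp add: d_def)
    finally show ?thesis using L DS
      by (smt (verit, ccfv_SIG) mult_left_mono zero_le_power2)
  qed
  have unr: "(\<Sum>t\<in>{1..T}. AA t) = (\<Sum>k\<in>{1..T}. WW beta k T * (AA k - beta k * AA (k - 1)))"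
    by (rule A_unroll) (rule AA0)
  also have "\<dots> = WW beta 1 T * (AA 1 - beta 1 * AA 0) + (\<Sum>k\<in>{2..T}. WW beta k T * (AA k - beta k * AA (k - 1)))"
    using T by (simp add: sum.atLeast_Suc_atMost numeral_2_eq_2)
  finally have unr2: "(\<Sum>t\<in>{1..T}. AA t) = WW beta 1 T * AA 1 + (\<Sum>k\<in>{2..T}. WW beta k T * (AA k - beta k * AA (k - 1)))"
    by (simp add: AA0)
  have W1: "WW beta 1 T * AA 1 \<ge> - (d * H * H / c / (1 - b1))"
  proof -
    have w: "0 \<le> WW beta 1 T" "WW beta 1 T \<le> 1 / (1 - b1)"
      using WW_ge'[of 1 T] T WW_le'[of 1 T] by auto
    have a: "\<bar>AA 1\<bar> \<le> d * H * H / c" using AA1_bd by (simp add: d_def)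
    have "WW beta 1 T * \<bar>AA 1\<bar> \<le> 1 / (1 - b1) * (d * H * H / c)"
      by (rule mult_mono[OF w(2) a]) (use b1 in auto)
    moreover have "WW beta 1 T * (- \<bar>AA 1\<bar>) \<le> WW beta 1 T * AA 1"
      by (rule mult_left_mono[OF _ w(1)]) simp
    moreover have e: "1/(1-b1) * (d*H*H/c) = d*H*H/c/(1-b1)" by simp
    ultimately show ?thesis by linarith
  qed
  have Wk: "WW beta k T * (AA k - beta k * AA (k - 1)) \<ge> WW beta k T * (1 - beta k) * GG k - E k / (1 - b1)"
    if k: "k \<in> {2..T}" for k
  proof -
    have w: "0 \<le> WW beta k T" "WW beta k T \<le> 1 / (1 - b1)"
      using WW_ge'[of k T] k WW_le'[of k T] by auto
    have "WW beta k T * (AA k - beta k * AA (k - 1)) \<ge> WW beta k T * ((1 - beta k) * GG k - E k)"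
      using D_ineq[of k] k w unfolding E_def by (intro mult_left_mono) auto
    moreover have "WW beta k T * E k \<le> 1 / (1 - b1) * E k"
      using w E0[of k] k by (intro mult_right_mono) auto
    ultimately show ?thesis by (simp add: algebra_simps)
  qed
  have "(\<Sum>k\<in>{2..T}. WW beta k T * (1 - beta k) * GG k) - (\<Sum>k\<in>{2..T}. E k) / (1 - b1)
      \<le> (\<Sum>k\<in>{2..T}. WW beta k T * (AA k - beta k * AA (k - 1)))"
  proof -
    have "(\<Sum>k\<in>{2..T}. WW beta k T * (1 - beta k) * GG k - E k / (1 - b1))
        \<le> (\<Sum>k\<in>{2..T}. WW beta k T * (AA k - beta k * AA (k - 1)))"
      by (intro sum_mono Wk)
    then show ?thesis by (simp add: sum_subtractf sum_divide_distrib)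
  qed
  moreover have "(\<Sum>t\<in>{1..T}. AA t) \<le> f x1 - fmin + L * Dl"
    using descent_sum[of T] DS L by (smt (verit) mult_left_mono)
  moreover have "(\<Sum>k\<in>{2..T}. E k) / (1 - b1) \<le> (L * Dl + 2 * H\<^sup>2 * (d / c)) / (1 - b1)"
    using sumE b1' by (intro divide_right_mono) auto
  ultimately have "(\<Sum>k\<in>{2..T}. WW beta k T * (1 - beta k) * GG k)
      \<le> f x1 - fmin + L * Dl + d * H * H / c / (1 - b1) + (L * Dl + 2 * H\<^sup>2 * (d / c)) / (1 - b1)"
    using unr2 W1 by linarith
  also have "\<dots> = f x1 - fmin + L * Dl + (d * H * H / c + L * Dl + 2 * H\<^sup>2 * (d / c)) / (1 - b1)"
    by (simp add: add_divide_distrib)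
  finally show ?thesis unfolding Dl_def d_def .
qed

end


lemma hist_space: "space (hist M g k) = space M"
  unfolding hist_def by (simp add: space_measure_of_conv)

lemma hist_subalg:
  fixes g :: "nat \<Rightarrow> 'a \<Rightarrow> real^'d"
  assumes g_meas: "\<And>t. g t \<in> borel_measurable M"
  shows "subalgebra M (hist M g k)"
proof -
  define G where "G = (\<Union>i\<in>{1..<k}. {g i -` A \<inter> space M | A. A \<in> sets borel})"
  have GP: "G \<subseteq> Pow (space M)" unfolding G_def by auto
  have GS: "G \<subseteq> sets M" unfolding G_def using g_meas by (auto intro: measurable_sets)
  have "sets (hist M g k) = sigma_sets (space M) G"
    unfolding hist_def G_def[symmetric] using GP by (rule sets_measure_of)
  then have "sets (hist M g k) \<subseteq> sets M" using sets.sigma_sets_subset[OF GS] by simp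
  then show ?thesis unfolding subalgebra_def by (simp add: hist_space)
qed

lemma hist_meas:
  fixes g :: "nat \<Rightarrow> 'a \<Rightarrow> real^'d"
  assumes s: "1 \<le> s" "s < k"
  shows "g s \<in> borel_measurable (hist M g k)"
proof (rule measurableI)
  define G where "G = (\<Union>i\<in>{1..<k}. {g i -` A \<inter> space M | A. A \<in> sets borel})"
  have GP: "G \<subseteq> Pow (space M)" unfolding G_def by auto
  have S: "sets (hist M g k) = sigma_sets (space M) G"
    unfolding hist_def G_def[symmetric] using GP by (rule sets_measure_of)
  fix A :: "(real^'d) set" assume A: "A \<in> sets borel"
  have "g s -` A \<inter> space M \<in> {g s -` A \<inter> space M | A. A \<in> sets borel}" using A by blast
  then have "g s -` A \<inter> space M \<in> G" unfolding G_def using s by (intro UN_I[of s]) auto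
  then show "g s -` A \<inter> space (hist M g k) \<in> sets (hist M g k)"
    unfolding S hist_space by (rule sigma_sets.Basic)
qed simp

lemma SS_meas:
  fixes g :: "nat \<Rightarrow> 'a \<Rightarrow> real^'d"
  assumes "\<And>s. 1 \<le> s \<Longrightarrow> s \<le> n \<Longrightarrow> g s \<in> borel_measurable N"
  shows "(\<lambda>w. SS (\<lambda>s. g s w) n i) \<in> borel_measurable N"
  unfolding SS_def by (intro borel_measurable_sum borel_measurable_power vec_nth_meas) (use assms in auto)

lemma lin_aux: fixes F L K A Bc q lam u :: real assumes "q \<noteq> 0"
  shows "F + L * (K * (1 + u + lam - mu)) + (A + L * (K * (1 + u + lam - mu)) + Bc) / q
       = (F + L * (K * (1 + lam - mu)) + (A + L * (K * (1 + lam - mu)) + Bc) / q) + (L * K + L * K / q) * u"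
  using assms by (simp add: field_simps)

lemma lin_aux2: fixes C0 C1 H q s u :: real assumes "q \<noteq> 0" "s \<noteq> 0"
  shows "2 * (C0 + C1 * u) * H / (q * s) = (2 * H * C0 / q + 2 * H * C1 / q * u) / s"
  using assms by (simp add: field_simps)

theorem corollary2:
  fixes M :: "'a measure"
    and f :: "real^'d \<Rightarrow> real" and grad :: "real^'d \<Rightarrow> real^'d"
    and g :: "nat \<Rightarrow> 'a \<Rightarrow> real^'d"
    and x1 :: "real^'d" and beta :: "nat \<Rightarrow> real"
    and L H c b1 :: real
  assumes M: "prob_space M"
    and f_deriv: "\<And>x. (f has_derivative (\<lambda>h. grad x \<bullet> h)) (at x)"
    and grad_lip: "\<And>x y. norm (grad x - grad y) \<le> L * norm (x - y)"
    and f_min: "\<exists>xs. \<forall>x. f xs \<le> f x"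
    and grad_bdd: "\<And>x. norm (grad x) \<le> H"
    and g_meas: "\<And>t. g t \<in> borel_measurable M"
    and g_bdd: "\<And>t. t \<ge> 1 \<Longrightarrow> AE \<omega> in M. norm (g t \<omega>) \<le> H"
    and noise: "\<And>t i. t \<ge> 1 \<Longrightarrow>
       AE \<omega> in M. real_cond_exp M (hist M g t)
         (\<lambda>\<omega>. (g t \<omega> - grad (adafom_x beta x1 (\<lambda>s. g s \<omega>) t)) $ i) \<omega> = 0"
    and b1: "0 \<le> b1" "b1 < 1"
    and beta_bdd: "\<And>t. t \<ge> 1 \<Longrightarrow> 0 \<le> beta t \<and> beta t \<le> b1"
    and beta_mono: "\<And>t. t \<ge> 1 \<Longrightarrow> beta (Suc t) \<le> beta t"
    and c: "c > 0"
    and g1: "AE \<omega> in M. \<forall>i. \<bar>g 1 \<omega> $ i\<bar> \<ge> c"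
  shows "\<exists>Q1 Q2. \<forall>T::nat. T \<ge> 1 \<longrightarrow>
    Min ((\<lambda>t. integral\<^sup>L M (\<lambda>\<omega>. (norm (grad (adafom_x beta x1 (\<lambda>s. g s \<omega>) t)))\<^sup>2)) ` {1..T})
      \<le> (Q1 + Q2 * ln (real T)) / sqrt (real T)"
proof -
  interpret P: prob_space M by (rule M)
  have fm: "finite_measure M" using M unfolding prob_space_def by simp
  have H0: "0 \<le> H" using grad_bdd[of 0] norm_ge_zero order_trans by blast
  have L0: "0 \<le> L"
  proof -
    define x :: "real^'d" where "x = (\<chi> i. 1)"
    have "x \<noteq> 0" by (simp add: x_def vec_eq_iff)
    then have np: "0 < norm x" by simp
    have "0 \<le> L * norm (x - 0)" using grad_lip[of x 0] norm_ge_zero[of "grad x - grad 0"] by linarith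
    then have "0 \<le> L * norm x" by simp
    then show ?thesis using np by (simp add: zero_le_mult_iff)
  qed
  obtain xs where xs: "\<And>x. f xs \<le> f x" using f_min by blast
  define goodp where "goodp \<omega> = ((\<forall>t. t \<ge> 1 \<longrightarrow> norm (g t \<omega>) \<le> H) \<and> (\<forall>i. c \<le> \<bar>g 1 \<omega> $ i\<bar>))" for \<omega>
  have gbAE: "AE \<omega> in M. \<forall>t. t \<ge> 1 \<longrightarrow> norm (g t \<omega>) \<le> H"
    unfolding AE_all_countable by (intro allI AE_impI g_bdd)
  have good: "AE \<omega> in M. goodp \<omega>"
    using gbAE g1 unfolding goodp_def by eventually_elim auto
  have cH: "c \<le> H"
  proof -
    have "AE \<omega> in M. c \<le> H"
      using good
    proof eventually_elim
      case (elim \<omega>)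
      have "c \<le> \<bar>g 1 \<omega> $ undefined\<bar>" using elim unfolding goodp_def by blast
      also have "\<dots> \<le> norm (g 1 \<omega>)" by (rule component_le_norm_cart)
      also have "\<dots> \<le> H" using elim unfolding goodp_def by simp
      finally show ?case .
    qed
    then show ?thesis by simp
  qed
  have Hpos: "0 < H" using cH c by linarith
  have grad_meas: "grad \<in> borel_measurable borel"
  proof -
    have "L-lipschitz_on UNIV grad" unfolding lipschitz_on_def using L0 grad_lip by (simp add: dist_norm)
    then have "continuous_on UNIV grad" by (rule lipschitz_on_continuous_on)
    then show ?thesis by (rule borel_measurable_continuous_onI)
  qed
  have X_meas: "(\<lambda>\<omega>. adafom_x beta x1 (\<lambda>s. g s \<omega>) k) \<in> borel_measurable N"
    if "\<And>s. 1 \<le> s \<Longrightarrow> s < k \<Longrightarrow> g s \<in> borel_measurable N" for k and N :: "'a measure"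
  proof -
    have "\<And>s. 1 \<le> s \<Longrightarrow> s \<le> k - 1 \<Longrightarrow> g s \<in> borel_measurable N" using that by auto
    from state_meas[of "k - 1" g N beta x1, OF this] show ?thesis unfolding adafom_x_XX by blast
  qed
  have GX_meas: "(\<lambda>\<omega>. grad (adafom_x beta x1 (\<lambda>s. g s \<omega>) k)) \<in> borel_measurable N"
    if "\<And>s. 1 \<le> s \<Longrightarrow> s < k \<Longrightarrow> g s \<in> borel_measurable N" for k and N :: "'a measure"
    using measurable_compose[OF X_meas[OF that] grad_meas] .
  have GXM: "(\<lambda>\<omega>. grad (adafom_x beta x1 (\<lambda>s. g s \<omega>) k)) \<in> borel_measurable M" for k
    by (rule GX_meas) (rule g_meas)
  have gcomp: "\<bar>grad x $ i\<bar> \<le> H" for x i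
    using component_le_norm_cart[of "grad x" i] grad_bdd[of x] by linarith
  have gkcomp: "\<bar>g k \<omega> $ i\<bar> \<le> H" if "goodp \<omega>" "k \<ge> 1" for \<omega> k i
    using component_le_norm_cart[of "g k \<omega>" i] that unfolding goodp_def by force
  have ETAb: "ETA (\<lambda>s. g s \<omega>) t i \<le> 1 / c" if "goodp \<omega>" "t \<ge> 1" for \<omega> t i
    by (rule ETA_bd[where gs="\<lambda>s. g s \<omega>" and H=H and c=c and ?b1.0=b1 and beta=beta and f=f and grad=grad and L=L and fmin="f xs"])
       (use that beta_bdd b1 grad_bdd grad_lip L0 f_deriv xs c in \<open>auto simp: goodp_def\<close>)
  have ETAlb: "1 / (H * sqrt (real T)) \<le> ETA (\<lambda>s. g s \<omega>) t i" if "goodp \<omega>" "t \<ge> 1" "t \<le> T" for \<omega> t i T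
    by (rule ETA_lb[where gs="\<lambda>s. g s \<omega>" and H=H and c=c and ?b1.0=b1 and beta=beta and f=f and grad=grad and L=L and fmin="f xs"])
       (use that beta_bdd b1 grad_bdd grad_lip L0 f_deriv xs c in \<open>auto simp: goodp_def\<close>)
  have ETA0: "0 \<le> ETA gs t i" for gs :: "nat \<Rightarrow> real^'d" and t i by (simp add: ETA_def SS_def sum_nonneg)
  define a where "a k = integral\<^sup>L M (\<lambda>\<omega>. (norm (grad (adafom_x beta x1 (\<lambda>s. g s \<omega>) k)))\<^sup>2)" for k
  define GG where "GG k = (\<lambda>\<omega>. \<Sum>i\<in>UNIV. grad (adafom_x beta x1 (\<lambda>s. g s \<omega>) k) $ i * ETA (\<lambda>s. g s \<omega>) (k - 1) i * g k \<omega> $ i)" for k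
  have a_nonneg: "0 \<le> a k" for k unfolding a_def by (rule integral_nonneg_AE) simp
  have a1: "a 1 \<le> H\<^sup>2"
  proof -
    have "a 1 = (norm (grad x1))\<^sup>2" unfolding a_def by (simp add: adafom_x_XX XX0 P.prob_space)
    also have "\<dots> \<le> H\<^sup>2" using grad_bdd[of x1] by (simp add: power_mono)
    finally show ?thesis .
  qed
  have key: "integrable M (GG k) \<and> a k / (H * sqrt (real T)) \<le> integral\<^sup>L M (GG k)"
    if k2: "2 \<le> k" and kT: "k \<le> T" for k T
  proof -
    define F where "F = hist M g k"
    have subF: "subalgebra M F" unfolding F_def by (rule hist_subalg[OF g_meas])
    have gF: "g s \<in> borel_measurable F" if "1 \<le> s" "s < k" for s unfolding F_def using that by (rule hist_meas)
    have sfs: "sigma_finite_subalgebra M F"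
      by (rule finite_measure_subalgebra_is_sigma_finite)
         (use subF fm in \<open>simp add: finite_measure_subalgebra_def finite_measure_subalgebra_axioms_def\<close>)
    have XF: "(\<lambda>\<omega>. grad (adafom_x beta x1 (\<lambda>s. g s \<omega>) k)) \<in> borel_measurable F"
      by (rule GX_meas) (rule gF)
    have SSF: "(\<lambda>\<omega>. SS (\<lambda>s. g s \<omega>) (k - 1) i) \<in> borel_measurable F" for i
      by (rule SS_meas) (use gF in auto)
    define Z where "Z i = (\<lambda>\<omega>. grad (adafom_x beta x1 (\<lambda>s. g s \<omega>) k) $ i * ETA (\<lambda>s. g s \<omega>) (k - 1) i)" for i
    define Y where "Y i = (\<lambda>\<omega>. (g k \<omega> - grad (adafom_x beta x1 (\<lambda>s. g s \<omega>) k)) $ i)" for i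
    have ZF: "Z i \<in> borel_measurable F" for i
      unfolding Z_def ETA_def using XF SSF[of i]
      by (intro borel_measurable_times borel_measurable_divide sqrt_meas vec_nth_meas borel_measurable_const)
    have ZM: "Z i \<in> borel_measurable M" for i by (rule measurable_from_subalg[OF subF ZF])
    have YM: "Y i \<in> borel_measurable M" for i
      unfolding Y_def using GXM[of k] g_meas[of k] by (intro vec_nth_meas borel_measurable_diff)
    have Zb: "AE \<omega> in M. norm (Z i \<omega>) \<le> H * (1 / c)" for i
      using good
    proof eventually_elim
      case (elim \<omega>)
      have "\<bar>Z i \<omega>\<bar> = \<bar>grad (adafom_x beta x1 (\<lambda>s. g s \<omega>) k) $ i\<bar> * ETA (\<lambda>s. g s \<omega>) (k - 1) i"
        unfolding Z_def by (simp add: abs_mult ETA0)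
      also have "\<dots> \<le> H * (1 / c)"
        using gcomp ETAb[OF elim, of "k - 1" i] k2 H0 by (intro mult_mono) (auto simp: ETA0)
      finally show ?case by simp
    qed
    have Yb: "AE \<omega> in M. norm (Y i \<omega>) \<le> H + H" for i
      using good
    proof eventually_elim
      case (elim \<omega>)
      have "\<bar>Y i \<omega>\<bar> \<le> \<bar>g k \<omega> $ i\<bar> + \<bar>grad (adafom_x beta x1 (\<lambda>s. g s \<omega>) k) $ i\<bar>"
        unfolding Y_def by simp
      also have "\<dots> \<le> H + H" using gcomp gkcomp[OF elim, of k i] k2 by (intro add_mono) auto
      finally show ?case by simp
    qed
    have ZYi: "integrable M (\<lambda>\<omega>. Z i \<omega> * Y i \<omega>)" for i
    proof (rule finite_measure.integrable_const_bound[OF fm])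
      show "AE \<omega> in M. norm (Z i \<omega> * Y i \<omega>) \<le> H * (1 / c) * (H + H)"
        using Zb[of i] Yb[of i]
      proof eventually_elim
        case (elim \<omega>)
        have "\<bar>Z i \<omega>\<bar> * \<bar>Y i \<omega>\<bar> \<le> (H * (1 / c)) * (H + H)"
          by (rule mult_mono) (use elim in auto)
        then show ?case by (simp add: abs_mult)
      qed
      show "(\<lambda>\<omega>. Z i \<omega> * Y i \<omega>) \<in> borel_measurable M" using ZM YM by simp
    qed
    have ZY0: "integral\<^sup>L M (\<lambda>\<omega>. Z i \<omega> * Y i \<omega>) = 0" for i
    proof -
      have "integral\<^sup>L M (\<lambda>\<omega>. Z i \<omega> * real_cond_exp M F (Y i) \<omega>) = integral\<^sup>L M (\<lambda>\<omega>. Z i \<omega> * Y i \<omega>)"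
        by (rule sigma_finite_subalgebra.real_cond_exp_intg(2)[OF sfs ZYi ZF YM])
      moreover have "integral\<^sup>L M (\<lambda>\<omega>. Z i \<omega> * real_cond_exp M F (Y i) \<omega>) = integral\<^sup>L M (\<lambda>\<omega>. 0)"
      proof (rule integral_cong_AE)
        have "real_cond_exp M F (Y i) \<in> borel_measurable M" by (rule borel_measurable_cond_exp2)
        then show "(\<lambda>\<omega>. Z i \<omega> * real_cond_exp M F (Y i) \<omega>) \<in> borel_measurable M" using ZM by simp
        show "(\<lambda>\<omega>. 0::real) \<in> borel_measurable M" by simp
        show "AE \<omega> in M. Z i \<omega> * real_cond_exp M F (Y i) \<omega> = 0"
          using noise[of k i] k2 unfolding F_def Y_def by (auto elim: AE_mp)
      qed
      ultimately show ?thesis by simp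
    qed
    define HH where "HH = (\<lambda>\<omega>. \<Sum>i\<in>UNIV. Z i \<omega> * grad (adafom_x beta x1 (\<lambda>s. g s \<omega>) k) $ i)"
    have GGeq: "GG k = (\<lambda>\<omega>. (\<Sum>i\<in>UNIV. Z i \<omega> * Y i \<omega>) + HH \<omega>)"
      unfolding GG_def HH_def Z_def Y_def by (simp add: sum.distrib[symmetric] algebra_simps)
    have HHi: "integrable M (\<lambda>\<omega>. Z i \<omega> * grad (adafom_x beta x1 (\<lambda>s. g s \<omega>) k) $ i)" for i
    proof (rule finite_measure.integrable_const_bound[OF fm])
      show "AE \<omega> in M. norm (Z i \<omega> * grad (adafom_x beta x1 (\<lambda>s. g s \<omega>) k) $ i) \<le> H * (1 / c) * H"
        using Zb[of i]
      proof eventually_elim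
        case (elim \<omega>)
        have "\<bar>Z i \<omega>\<bar> * \<bar>grad (adafom_x beta x1 (\<lambda>s. g s \<omega>) k) $ i\<bar> \<le> (H * (1 / c)) * H"
          by (rule mult_mono) (use elim gcomp in auto)
        then show ?case by (simp add: abs_mult)
      qed
      show "(\<lambda>\<omega>. Z i \<omega> * grad (adafom_x beta x1 (\<lambda>s. g s \<omega>) k) $ i) \<in> borel_measurable M"
        using ZM GXM[of k] by simp
    qed
    have HHint: "integrable M HH" unfolding HH_def by (rule Bochner_Integration.integrable_sum) (rule HHi)
    have SYint: "integrable M (\<lambda>\<omega>. \<Sum>i\<in>UNIV. Z i \<omega> * Y i \<omega>)" by (rule Bochner_Integration.integrable_sum) (rule ZYi)
    have GGint: "integrable M (GG k)" unfolding GGeq using SYint HHint by (rule Bochner_Integration.integrable_add)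
    have "integral\<^sup>L M (GG k) = integral\<^sup>L M (\<lambda>\<omega>. \<Sum>i\<in>UNIV. Z i \<omega> * Y i \<omega>) + integral\<^sup>L M HH"
      unfolding GGeq using SYint HHint by (rule Bochner_Integration.integral_add)
    also have "integral\<^sup>L M (\<lambda>\<omega>. \<Sum>i\<in>UNIV. Z i \<omega> * Y i \<omega>) = 0"
      using Bochner_Integration.integral_sum[of UNIV M "\<lambda>i \<omega>. Z i \<omega> * Y i \<omega>"] ZYi ZY0 by simp
    finally have GGHH: "integral\<^sup>L M (GG k) = integral\<^sup>L M HH" by simp
    have nint: "integrable M (\<lambda>\<omega>. (norm (grad (adafom_x beta x1 (\<lambda>s. g s \<omega>) k)))\<^sup>2 / (H * sqrt (real T)))"
    proof (rule finite_measure.integrable_const_bound[OF fm])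
      show "AE \<omega> in M. norm ((norm (grad (adafom_x beta x1 (\<lambda>s. g s \<omega>) k)))\<^sup>2 / (H * sqrt (real T))) \<le> H\<^sup>2 / (H * sqrt (real T))"
        using Hpos grad_bdd by (intro AE_I2) (simp add: divide_right_mono power_mono)
      show "(\<lambda>\<omega>. (norm (grad (adafom_x beta x1 (\<lambda>s. g s \<omega>) k)))\<^sup>2 / (H * sqrt (real T))) \<in> borel_measurable M"
        using GXM[of k] by simp
    qed
    have "AE \<omega> in M. (norm (grad (adafom_x beta x1 (\<lambda>s. g s \<omega>) k)))\<^sup>2 / (H * sqrt (real T)) \<le> HH \<omega>"
      using good
    proof eventually_elim
      case (elim \<omega>)
      let ?v = "grad (adafom_x beta x1 (\<lambda>s. g s \<omega>) k)"
      have "(norm ?v)\<^sup>2 / (H * sqrt (real T)) = (\<Sum>i\<in>UNIV. (?v $ i)\<^sup>2 * (1 / (H * sqrt (real T))))"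
        by (simp add: norm2_vec sum_divide_distrib)
      also have "\<dots> \<le> (\<Sum>i\<in>UNIV. (?v $ i)\<^sup>2 * ETA (\<lambda>s. g s \<omega>) (k - 1) i)"
        using ETAlb[OF elim, of "k - 1" T] k2 kT by (intro sum_mono mult_left_mono) auto
      also have "\<dots> = HH \<omega>" unfolding HH_def Z_def by (simp add: power2_eq_square algebra_simps)
      finally show ?case .
    qed
    then have "integral\<^sup>L M (\<lambda>\<omega>. (norm (grad (adafom_x beta x1 (\<lambda>s. g s \<omega>) k)))\<^sup>2 / (H * sqrt (real T))) \<le> integral\<^sup>L M HH"
      using nint HHint by (intro integral_mono_AE) auto
    then have "a k / (H * sqrt (real T)) \<le> integral\<^sup>L M (GG k)" unfolding a_def GGHH by simp
    then show ?thesis using GGint by simp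
  qed
  define d where "d = real CARD('d)"
  define Bnd where "Bnd T = (f x1 - f xs) + L * (d / (1 - b1) * (1 + ln (real T) + ln (H\<^sup>2) - ln (c\<^sup>2))) + (d * H * H / c + L * (d / (1 - b1) * (1 + ln (real T) + ln (H\<^sup>2) - ln (c\<^sup>2))) + 2 * H\<^sup>2 * (d / c)) / (1 - b1)" for T :: nat
  define C1 where "C1 = L * (d / (1 - b1)) + L * (d / (1 - b1)) / (1 - b1)"
  define C0 where "C0 = (f x1 - f xs) + L * (d / (1 - b1) * (1 + ln (H\<^sup>2) - ln (c\<^sup>2))) + (d * H * H / c + L * (d / (1 - b1) * (1 + ln (H\<^sup>2) - ln (c\<^sup>2))) + 2 * H\<^sup>2 * (d / c)) / (1 - b1)"
  have p: "0 < 1 - b1" using b1 by simp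
  have BndC: "Bnd T = C0 + C1 * ln (real T)" for T
    unfolding Bnd_def C0_def C1_def using p by (intro lin_aux) simp
  define Q1 where "Q1 = max (H\<^sup>2) (2 * H * C0 / (1 - b1))"
  define Q2 where "Q2 = 2 * H * C1 / (1 - b1)"
  have aeq: "(\<lambda>t. integral\<^sup>L M (\<lambda>\<omega>. (norm (grad (adafom_x beta x1 (\<lambda>s. g s \<omega>) t)))\<^sup>2)) = a"
    by (rule ext) (simp add: a_def)
  show ?thesis unfolding aeq
  proof (intro exI allI impI)
    fix T :: nat assume T1: "T \<ge> 1"
    have fin: "finite (a ` {1..T})" "a ` {1..T} \<noteq> {}" using T1 by auto
    have Min_le': "Min (a ` {1..T}) \<le> a k" if "k \<in> {1..T}" for k
      using fin that by (intro Min_le) auto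
    have Min_nn: "0 \<le> Min (a ` {1..T})"
      using Min_in[OF fin] a_nonneg by auto
    show "Min (a ` {1..T}) \<le> (Q1 + Q2 * ln (real T)) / sqrt (real T)"
    proof (cases "T = 1")
      case True
      have "Min (a ` {1..T}) \<le> a 1" using Min_le'[of 1] T1 by auto
      also have "\<dots> \<le> Q1" using a1 unfolding Q1_def by simp
      finally show ?thesis using True by simp
    next
      case False
      then have T2: "T \<ge> 2" using T1 by simp
      define X where "X = Min (a ` {1..T})"
      define LHS where "LHS \<omega> = (\<Sum>k\<in>{2..T}. WW beta k T * (1 - beta k) * GG k \<omega>)" for \<omega>
      have GGi: "integrable M (GG k)" if "k \<in> {2..T}" for k using key[of k T] that by auto
      have LHSint: "integrable M LHS" unfolding LHS_def
        by (intro Bochner_Integration.integrable_sum integrable_mult_right GGi)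
      have intLHS: "integral\<^sup>L M LHS = (\<Sum>k\<in>{2..T}. WW beta k T * (1 - beta k) * integral\<^sup>L M (GG k))"
        unfolding LHS_def using GGi
        by (subst Bochner_Integration.integral_sum) (auto intro!: integrable_mult_right)
      have AEb: "AE \<omega> in M. LHS \<omega> \<le> Bnd T"
        using good
      proof eventually_elim
        case (elim \<omega>)
        show ?case unfolding LHS_def GG_def Bnd_def d_def
          by (rule path_bound[where gs="\<lambda>s. g s \<omega>" and H=H and c=c and ?b1.0=b1 and beta=beta and ?x1.0=x1 and f=f and grad=grad and L=L and fmin="f xs"])
             (use elim beta_bdd b1 grad_bdd grad_lip L0 f_deriv xs c T1 in \<open>auto simp: goodp_def\<close>)
      qed
      have up: "integral\<^sup>L M LHS \<le> Bnd T" by (rule P.integral_le_const[OF LHSint AEb])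
      have lowk: "(1 - b1) * (X / (H * sqrt (real T))) \<le> WW beta k T * (1 - beta k) * integral\<^sup>L M (GG k)"
        if k: "k \<in> {2..T}" for k
      proof -
        have w: "1 \<le> WW beta k T" using WW_ge[of beta b1 k T] beta_bdd b1 k by auto
        have bk: "1 - b1 \<le> 1 - beta k" using beta_bdd[of k] k by auto
        have "1 - b1 \<le> WW beta k T * (1 - beta k)"
          using mult_mono[OF w bk] p w by simp
        moreover have "X / (H * sqrt (real T)) \<le> integral\<^sup>L M (GG k)"
        proof -
          have "X \<le> a k" unfolding X_def using Min_le'[of k] k by auto
          then have "X / (H * sqrt (real T)) \<le> a k / (H * sqrt (real T))"
            using Hpos by (intro divide_right_mono) auto
          also have "\<dots> \<le> integral\<^sup>L M (GG k)" using key[of k T] k by auto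
          finally show ?thesis .
        qed
        moreover have "0 \<le> X / (H * sqrt (real T))" using Min_nn Hpos unfolding X_def by simp
        ultimately show ?thesis using p by (intro mult_mono) auto
      qed
      have "(\<Sum>k\<in>{2..T}. (1 - b1) * (X / (H * sqrt (real T)))) \<le> integral\<^sup>L M LHS"
        unfolding intLHS by (intro sum_mono lowk)
      then have i: "real (T - 1) * ((1 - b1) * (X / (H * sqrt (real T)))) \<le> Bnd T"
        using up by simp
      define n where "n = real (T - 1)"
      define s where "s = sqrt (real T)"
      define B where "B = Bnd T"
      have n1: "1 \<le> n" using T2 by (simp add: n_def)
      have Tn: "real T = n + 1" using T2 by (simp add: n_def)
      have s0: "0 < s" using T1 by (simp add: s_def)
      have ss: "s * s = n + 1" using Tn by (simp add: s_def)
      have X0: "0 \<le> X" using Min_nn by (simp add: X_def)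
      have e1: "n * (1 - b1) * X \<le> B * (H * s)"
      proof -
        have "n * ((1 - b1) * (X / (H * s))) = (n * (1 - b1) * X) / (H * s)" by simp
        then have "(n * (1 - b1) * X) / (H * s) \<le> B" using i by (simp add: n_def s_def B_def)
        then show ?thesis using Hpos s0 by (simp add: pos_divide_le_eq)
      qed
      have e2: "X * (1 - b1) * (s * s) \<le> 2 * (B * H * s)"
      proof -
        have "X * (1 - b1) * (s * s) = X * (1 - b1) * (n + 1)" by (simp add: ss)
        also have "\<dots> \<le> X * (1 - b1) * (2 * n)" using X0 p n1 by (intro mult_left_mono) auto
        also have "\<dots> = 2 * (n * (1 - b1) * X)" by simp
        also have "\<dots> \<le> 2 * (B * (H * s))" using e1 by simp
        finally show ?thesis by simp
      qed
      have e3: "X * (1 - b1) * s \<le> 2 * B * H"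
      proof (rule mult_right_le_imp_le[OF _ s0])
        show "X * (1 - b1) * s * s \<le> 2 * B * H * s" using e2 by (simp add: mult.assoc)
      qed
      have e4: "X \<le> 2 * B * H / ((1 - b1) * s)"
        using e3 p s0 by (simp add: pos_le_divide_eq mult.assoc)
      also have "2 * B * H / ((1 - b1) * s) = (2 * H * C0 / (1 - b1) + Q2 * ln (real T)) / s"
        unfolding B_def BndC Q2_def using p s0 by (intro lin_aux2) auto
      also have "\<dots> \<le> (Q1 + Q2 * ln (real T)) / s"
        unfolding Q1_def using s0 by (intro divide_right_mono) auto
      finally show ?thesis by (simp add: X_def s_def)
    qed
  qed
qed

end
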